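(* Let $(G,L,F)$ be a Stackelberg game and $\mathbf{x}=[x_\pi]\in\mathbf{X}^{PS}$. Then there exists $\mathbf{x}'=[x'_\pi]\in\mathbf{X}^{PS}$ such that $x'_\varnothing=x_\varnothing$ and $x'_{\pi p}=x'_{\pi' p}$ for every $p\in L$ and every $\pi,\pi'\in\Pi_{L\setminus\{p\}}$ having the same set of entries.
   Context: A finite game is $G=(N,\{S_p\}_{p\in N},\{u_p\}_{p\in N})$ with players $N=\{1,\dots,n\}$, finite nonempty strategy sets $S_p$, and utilities $u_p:S\to\mathbb{R}$ on $S=\prod_{p\in N}S_p$; write $s=(s_p,s_{-p})$ with $s_{-p}\in S_{-p}=\prod_{q\neq p}S_q$. $\mathcal{X}=\Delta(S)$ is the set of probability distributions on $S$ and $u_p(x)=\sum_{s\in S}x(s)u_p(s)$ for $x\in\mathcal{X}$. For $P\subseteq N$, $\mathcal{X}^{CE}_P$ is the set of $x\in\mathcal{X}$ such that for every $p\in P$ and all $s_p\neq s_p'\in S_p$: $\sum_{s_{-p}\in S_{-p}} x(s_p,s_{-p})\,(u_p(s_p,s_{-p})-u_p(s_p',s_{-p}))\ge 0$; $\mathcal{X}^{CE}=\mathcal{X}^{CE}_N$ is the set of correlated equilibria of $G$. A Stackelberg game (SG) is a triple $(G,L,F)$ with $L\cup F=N$ and $L\cap F=\emptyset$ (leaders and followers). For $P\subseteq N$, $\Pi_P$ is the set of ordered subsets of $P$ (finite sequences of pairwise distinct elements of $P$, including the empty sequence $\varnothing$); for $\pi\in\Pi_P$ and $p\in P$ not occurring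 in $\pi$, $\pi p$ is $\pi$ with $p$ appended; when used as a set, $\pi$ means its set of entries. $\mathbf{X}=\prod_{\pi\in\Pi_L}\mathcal{X}^{CE}_{\pi\cup F}$, with elements $\mathbf{x}=[x_\pi]_{\pi\in\Pi_L}$. For $\mathbf{x}\in\mathbf{X}$ and $\pi\in\Pi_L$, $x_\pi$ is stable if $u_p(x_\pi)\ge u_p(x_{\pi p})$ for all $p\in L\setminus\pi$; $\mathbf{x}$ is stable if $x_\varnothing$ is stable, and perfectly stable if $x_\pi$ is stable for every $\pi\in\Pi_L$; $\mathbf{X}^{S}$ and $\mathbf{X}^{PS}$ denote the sets of stable and perfectly stable elements of $\mathbf{X}$. *)

theory Defs
  imports "HOL-Analysis.Analysis"
begin

definition finite_game :: "'p set \<Rightarrow> ('p \<Rightarrow> 's set) \<Rightarrow> bool" where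
  "finite_game N S \<longleftrightarrow> finite N \<and> N \<noteq> {} \<and> (\<forall>p\<in>N. finite (S p) \<and> S p \<noteq> {})"

abbreviation profiles :: "'p set \<Rightarrow> ('p \<Rightarrow> 's set) \<Rightarrow> ('p \<Rightarrow> 's) set" where
  "profiles N S \<equiv> PiE N S"

definition distrs :: "'p set \<Rightarrow> ('p \<Rightarrow> 's set) \<Rightarrow> (('p \<Rightarrow> 's) \<Rightarrow> real) set" where
  "distrs N S = {x. (\<forall>s\<in>profiles N S. x s \<ge> 0) \<and> (\<forall>s. s \<notin> profiles N S \<longrightarrow> x s = 0)
                   \<and> (\<Sum>s\<in>profiles N S. x s) = 1}"

definition exp_util :: "'p set \<Rightarrow> ('p \<Rightarrow> 's set) \<Rightarrow> ('p \<Rightarrow> ('p \<Rightarrow> 's) \<Rightarrow> real)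
    \<Rightarrow> 'p \<Rightarrow> (('p \<Rightarrow> 's) \<Rightarrow> real) \<Rightarrow> real" where
  "exp_util N S u p x = (\<Sum>s\<in>profiles N S. x s * u p s)"

text \<open>\<open>X^CE_P\<close>: distributions satisfying the correlated-equilibrium constraints of all players in P.
  The sum over \<open>s_{-p}\<close> of \<open>x(a, s_{-p})\<close> is the sum over profiles s with \<open>s p = a\<close>,
  and \<open>(b, s_{-p})\<close> is \<open>s(p := b)\<close>.\<close>
definition CE_set :: "'p set \<Rightarrow> ('p \<Rightarrow> 's set) \<Rightarrow> ('p \<Rightarrow> ('p \<Rightarrow> 's) \<Rightarrow> real) \<Rightarrow> 'p set
    \<Rightarrow> (('p \<Rightarrow> 's) \<Rightarrow> real) set" where
  "CE_set N S u P = {x \<in> distrs N S. \<forall>p\<in>P. \<forall>a\<in>S p. \<forall>b\<in>S p. a \<noteq> b \<longrightarrow>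
      (\<Sum>s\<in>{s\<in>profiles N S. s p = a}. x s * (u p s - u p (s(p := b)))) \<ge> 0}"

definition ordsubs :: "'p set \<Rightarrow> 'p list set" where
  "ordsubs P = {\<pi>. distinct \<pi> \<and> set \<pi> \<subseteq> P}"

definition stackelberg_game :: "'p set \<Rightarrow> ('p \<Rightarrow> 's set) \<Rightarrow> 'p set \<Rightarrow> 'p set \<Rightarrow> bool" where
  "stackelberg_game N S L F \<longleftrightarrow> finite_game N S \<and> L \<union> F = N \<and> L \<inter> F = {}"

text \<open>Bold X: families indexed by ordered subsets of L (entries at other lists are irrelevant).\<close>
definition bfX :: "'p set \<Rightarrow> ('p \<Rightarrow> 's set) \<Rightarrow> ('p \<Rightarrow> ('p \<Rightarrow> 's) \<Rightarrow> real) \<Rightarrow> 'p set \<Rightarrow> 'p set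
    \<Rightarrow> ('p list \<Rightarrow> ('p \<Rightarrow> 's) \<Rightarrow> real) set" where
  "bfX N S u L F = {x. \<forall>\<pi>\<in>ordsubs L. x \<pi> \<in> CE_set N S u (set \<pi> \<union> F)}"

definition stable_at :: "'p set \<Rightarrow> ('p \<Rightarrow> 's set) \<Rightarrow> ('p \<Rightarrow> ('p \<Rightarrow> 's) \<Rightarrow> real) \<Rightarrow> 'p set
    \<Rightarrow> ('p list \<Rightarrow> ('p \<Rightarrow> 's) \<Rightarrow> real) \<Rightarrow> 'p list \<Rightarrow> bool" where
  "stable_at N S u L x \<pi> \<longleftrightarrow>
     (\<forall>p\<in>L - set \<pi>. exp_util N S u p (x \<pi>) \<ge> exp_util N S u p (x (\<pi> @ [p])))"

definition perfectly_stable :: "'p set \<Rightarrow> ('p \<Rightarrow> 's set) \<Rightarrow> ('p \<Rightarrow> ('p \<Rightarrow> 's) \<Rightarrow> real) \<Rightarrow> 'p set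
    \<Rightarrow> 'p set \<Rightarrow> ('p list \<Rightarrow> ('p \<Rightarrow> 's) \<Rightarrow> real) set" where
  "perfectly_stable N S u L F =
     {x \<in> bfX N S u L F. \<forall>\<pi>\<in>ordsubs L. stable_at N S u L x \<pi>}"

end

theory Submission
  imports Defs
begin

primrec Gm :: "('p \<Rightarrow> 'p list \<Rightarrow> real) \<Rightarrow> nat \<Rightarrow> 'p list \<Rightarrow> 'p list" where
  "Gm v 0 \<sigma> = []"
| "Gm v (Suc n) \<sigma> = (if \<sigma> = [] then [] else
     Gm v n (SOME \<rho>. distinct \<rho> \<and> set \<rho> = set (butlast \<sigma>) \<and>
        (\<forall>\<rho>'. distinct \<rho>' \<and> set \<rho>' = set (butlast \<sigma>) \<longrightarrow>
           v (last \<sigma>) (Gm v n \<rho> @ [last \<sigma>]) \<le> v (last \<sigma>) (Gm v n \<rho>' @ [last \<sigma>])))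
     @ [last \<sigma>])"

lemma exmin:
  fixes g :: "'a list \<Rightarrow> real"
  assumes "finite A"
  shows "\<exists>\<rho>. distinct \<rho> \<and> set \<rho> = A \<and> (\<forall>\<rho>'. distinct \<rho>' \<and> set \<rho>' = A \<longrightarrow> g \<rho> \<le> g \<rho>')"
proof -
  let ?S = "{\<rho>. distinct \<rho> \<and> set \<rho> = A}"
  have fin: "finite ?S"
    by (rule finite_subset[OF _ finite_subset_distinct[OF assms]]) auto
  have ne: "?S \<noteq> {}" using finite_distinct_list[OF assms] by auto
  have "arg_min_on g ?S \<in> ?S" "\<not>(\<exists>y\<in>?S. g y < g (arg_min_on g ?S))"
    using arg_min_if_finite[OF fin ne] by auto
  then show ?thesis by (intro exI[of _ "arg_min_on g ?S"]) (auto simp: not_less)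
qed

lemma Gm_sel:
  fixes v :: "'p \<Rightarrow> 'p list \<Rightarrow> real"
  assumes "finite A"
  shows "(\<lambda>\<rho>. distinct \<rho> \<and> set \<rho> = A \<and>
        (\<forall>\<rho>'. distinct \<rho>' \<and> set \<rho>' = A \<longrightarrow>
           v q (Gm v n \<rho> @ [q]) \<le> v q (Gm v n \<rho>' @ [q])))
     (SOME \<rho>. distinct \<rho> \<and> set \<rho> = A \<and>
        (\<forall>\<rho>'. distinct \<rho>' \<and> set \<rho>' = A \<longrightarrow>
           v q (Gm v n \<rho> @ [q]) \<le> v q (Gm v n \<rho>' @ [q])))"
  by (rule someI_ex, rule exmin[OF assms])

lemma Gm_snoc:
  "Gm v (Suc n) (\<sigma> @ [q]) = Gm v n (SOME \<rho>. distinct \<rho> \<and> set \<rho> = set \<sigma> \<and>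
        (\<forall>\<rho>'. distinct \<rho>' \<and> set \<rho>' = set \<sigma> \<longrightarrow>
           v q (Gm v n \<rho> @ [q]) \<le> v q (Gm v n \<rho>' @ [q]))) @ [q]"
  by simp

lemma Gm_props:
  "distinct \<sigma> \<Longrightarrow> length \<sigma> = n \<Longrightarrow> distinct (Gm v n \<sigma>) \<and> set (Gm v n \<sigma>) = set \<sigma>"
proof (induction n arbitrary: \<sigma>)
  case 0
  then show ?case by simp
next
  case (Suc n)
  then have ne: "\<sigma> \<noteq> []" by auto
  then obtain \<tau> q where s: "\<sigma> = \<tau> @ [q]" by (metis append_butlast_last_id)
  let ?\<rho> = "(SOME \<rho>. distinct \<rho> \<and> set \<rho> = set \<tau> \<and>
        (\<forall>\<rho>'. distinct \<rho>' \<and> set \<rho>' = set \<tau> \<longrightarrow>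
           v q (Gm v n \<rho> @ [q]) \<le> v q (Gm v n \<rho>' @ [q])))"
  have r: "distinct ?\<rho>" "set ?\<rho> = set \<tau>"
    using Gm_sel[of "set \<tau>" v q n] by auto
  have "length \<tau> = n" using Suc.prems s by simp
  moreover have "length ?\<rho> = length \<tau>"
  proof -
    have "distinct \<tau>" using Suc.prems s by simp
    then have "length \<tau> = card (set \<tau>)" by (simp add: distinct_card)
    moreover have "length ?\<rho> = card (set ?\<rho>)" using r(1) by (simp add: distinct_card)
    ultimately show ?thesis using r(2) by simp
  qed
  ultimately have ih: "distinct (Gm v n ?\<rho>) \<and> set (Gm v n ?\<rho>) = set \<tau>"
    using Suc.IH[of ?\<rho>] r by simp
  have "q \<notin> set \<tau>" using Suc.prems s by simp
  then have "distinct (Gm v n ?\<rho> @ [q]) \<and> set (Gm v n ?\<rho> @ [q]) = set \<sigma>"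
    using ih s by simp
  then show ?case unfolding s by (simp only: Gm_snoc)
qed

theorem theorem6:
  fixes N L F :: "'p set" and S :: "'p \<Rightarrow> 's set" and u :: "'p \<Rightarrow> ('p \<Rightarrow> 's) \<Rightarrow> real"
    and x :: "'p list \<Rightarrow> ('p \<Rightarrow> 's) \<Rightarrow> real"
  assumes "stackelberg_game N S L F"
    and "x \<in> perfectly_stable N S u L F"
  shows "\<exists>x'. x' \<in> perfectly_stable N S u L F \<and> x' [] = x [] \<and>
           (\<forall>p\<in>L. \<forall>\<pi>\<in>ordsubs (L - {p}). \<forall>\<pi>'\<in>ordsubs (L - {p}).
              set \<pi> = set \<pi>' \<longrightarrow> x' (\<pi> @ [p]) = x' (\<pi>' @ [p]))"
proof -
  define v where "v q \<rho> = exp_util N S u q (x \<rho>)" for q \<rho>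
  define x' where "x' \<pi> = x (Gm v (length \<pi>) \<pi>)" for \<pi>
  have xX: "x \<in> bfX N S u L F" and xs: "\<forall>\<pi>\<in>ordsubs L. stable_at N S u L x \<pi>"
    using assms(2) unfolding perfectly_stable_def by auto
  have finL: "finite L" using assms(1)
    unfolding stackelberg_game_def finite_game_def by (metis finite_Un)
  have G_ord: "Gm v (length \<pi>) \<pi> \<in> ordsubs L \<and> set (Gm v (length \<pi>) \<pi>) = set \<pi>"
    if "\<pi> \<in> ordsubs L" for \<pi>
    using Gm_props[of \<pi> "length \<pi>" v] that unfolding ordsubs_def by auto
  have bf: "x' \<in> bfX N S u L F"
    unfolding bfX_def
  proof (intro CollectI ballI)
    fix \<pi> assume "\<pi> \<in> ordsubs L"
    with G_ord[OF this] xX show "x' \<pi> \<in> CE_set N S u (set \<pi> \<union> F)"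
      unfolding bfX_def x'_def by force
  qed
  have st: "stable_at N S u L x' \<pi>" if \<pi>: "\<pi> \<in> ordsubs L" for \<pi>
    unfolding stable_at_def
  proof
    fix p assume p: "p \<in> L - set \<pi>"
    let ?n = "length \<pi>"
    let ?\<rho> = "(SOME \<rho>. distinct \<rho> \<and> set \<rho> = set \<pi> \<and>
        (\<forall>\<rho>'. distinct \<rho>' \<and> set \<rho>' = set \<pi> \<longrightarrow>
           v p (Gm v ?n \<rho> @ [p]) \<le> v p (Gm v ?n \<rho>' @ [p])))"
    have fin: "finite (set \<pi>)" by simp
    have "v p (Gm v ?n ?\<rho> @ [p]) \<le> v p (Gm v ?n \<pi> @ [p])"
      using Gm_sel[OF fin, of v p ?n] \<pi> unfolding ordsubs_def by auto
    also have "\<dots> \<le> v p (Gm v ?n \<pi>)"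
      using xs G_ord[OF \<pi>] p unfolding stable_at_def v_def by auto
    finally have "v p (Gm v (Suc ?n) (\<pi> @ [p])) \<le> v p (Gm v ?n \<pi>)"
      by (simp only: Gm_snoc)
    then show "exp_util N S u p (x' (\<pi> @ [p])) \<le> exp_util N S u p (x' \<pi>)"
      unfolding x'_def v_def by simp
  qed
  have inv: "x' (\<pi> @ [p]) = x' (\<pi>' @ [p])"
    if "\<pi> \<in> ordsubs (L - {p})" "\<pi>' \<in> ordsubs (L - {p})" "set \<pi> = set \<pi>'" for p \<pi> \<pi>'
  proof -
    have "length \<pi> = length \<pi>'" using that unfolding ordsubs_def
      by (metis (mono_tags, lifting) distinct_card mem_Collect_eq)
    then show ?thesis unfolding x'_def using that(3) by (simp only: length_append_singleton Gm_snoc)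
  qed
  have p: "x' \<in> perfectly_stable N S u L F"
    unfolding perfectly_stable_def using bf st by blast
  have e: "x' [] = x []" unfolding x'_def by (simp only: list.size Gm.simps)
  show ?thesis
    apply (rule exI[of _ x'])
    apply (intro conjI p e ballI impI)
    apply (erule (2) inv)
    done
qed

end
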